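(* Let $G$ be an $r$-regular graph on $n$ vertices, where $n$ is even, and let $A$ be an Abelian group of order $n$ having exactly one involution (element of order 2). If $G$ is $A$-distance antimagic, then $r$ is odd.
   Context: All groups are finite Abelian, written additively. Let $G$ be a finite simple graph with $n$ vertices and $A$ an Abelian group of order $n$. For a bijection $f: V(G)\to A$, the weight of a vertex $x$ is $w_f(x)=\sum_{y\in N(x)} f(y)$, computed in $A$, where $N(x)$ is the open neighbourhood of $x$. $f$ is an $A$-distance antimagic labelling if the weights of all vertices are pairwise distinct; $f$ is an $A$-distance magic labelling if all vertices have the same weight (the magic constant). $G$ is $A$-distance antimagic (resp. magic) if it admits such a labelling. *)

theory Defs
  imports Main
begin

definition simple_graph :: "'a set \<Rightarrow> ('a \<Rightarrow> 'a \<Rightarrow> bool) \<Rightarrow> bool" where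
  "simple_graph V E \<longleftrightarrow> finite V \<and> (\<forall>x y. E x y \<longrightarrow> x \<in> V \<and> y \<in> V)
     \<and> (\<forall>x y. E x y \<longrightarrow> E y x) \<and> (\<forall>x. \<not> E x x)"

definition nbhd :: "'a set \<Rightarrow> ('a \<Rightarrow> 'a \<Rightarrow> bool) \<Rightarrow> 'a \<Rightarrow> 'a set" where
  "nbhd V E x = {y \<in> V. E x y}"

definition regular :: "'a set \<Rightarrow> ('a \<Rightarrow> 'a \<Rightarrow> bool) \<Rightarrow> nat \<Rightarrow> bool" where
  "regular V E r \<longleftrightarrow> (\<forall>x\<in>V. card (nbhd V E x) = r)"

definition weight :: "'a set \<Rightarrow> ('a \<Rightarrow> 'a \<Rightarrow> bool) \<Rightarrow> ('a \<Rightarrow> 'b::ab_group_add) \<Rightarrow> 'a \<Rightarrow> 'b" where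
  "weight V E f x = (\<Sum>y\<in>nbhd V E x. f y)"

definition A_distance_antimagic_labelling ::
  "'a set \<Rightarrow> ('a \<Rightarrow> 'a \<Rightarrow> bool) \<Rightarrow> ('a \<Rightarrow> 'b::ab_group_add) \<Rightarrow> bool" where
  "A_distance_antimagic_labelling V E f \<longleftrightarrow>
     bij_betw f V (UNIV :: 'b set) \<and> inj_on (weight V E f) V"

definition A_distance_antimagic ::
  "'a set \<Rightarrow> ('a \<Rightarrow> 'a \<Rightarrow> bool) \<Rightarrow> 'b::ab_group_add itself \<Rightarrow> bool" where
  "A_distance_antimagic V E _ \<longleftrightarrow> (\<exists>f :: 'a \<Rightarrow> 'b. A_distance_antimagic_labelling V E f)"

definition involutions :: "'b::ab_group_add set" where
  "involutions = {x. x \<noteq> 0 \<and> x + x = 0}"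

end

theory Submission
  imports Defs
begin

definition mult :: "nat \<Rightarrow> 'b::ab_group_add \<Rightarrow> 'b" where
  "mult k c = (\<Sum>i<k. c)"

lemma sum_const_mult: "finite B \<Longrightarrow> (\<Sum>x\<in>B. c) = mult (card B) (c::'b::ab_group_add)"
  unfolding mult_def
proof (induction B rule: finite_induct)
  case empty then show ?case by simp
next
  case (insert x F) then show ?case by (simp add: add.commute)
qed

lemma mult_inv: "(c::'b::ab_group_add) + c = 0 \<Longrightarrow> mult r c = (if even r then 0 else c)"
  unfolding mult_def by (induction r) (auto simp: add.commute)

lemma pair_sum_zero:
  "finite T \<Longrightarrow> (\<forall>x\<in>T. -x \<in> T \<and> -x \<noteq> x) \<Longrightarrow> (\<Sum>x\<in>T. x) = (0::'b::ab_group_add)"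
proof (induction "card T" arbitrary: T rule: less_induct)
  case less
  show ?case
  proof (cases "T = {}")
    case True then show ?thesis by simp
  next
    case False
    then obtain x where x: "x \<in> T" by auto
    define T' where "T' = T - {x, -x}"
    have mx: "-x \<in> T" "-x \<noteq> x" using less.prems x by auto
    have fin: "finite T'" using less.prems T'_def by simp
    have cl: "\<forall>y\<in>T'. -y \<in> T' \<and> -y \<noteq> y" using less.prems unfolding T'_def
      by (auto simp: minus_equation_iff)
    have "T' \<subset> T" using x by (auto simp: T'_def)
    then have lt: "card T' < card T" using less.prems(1) by (simp add: psubset_card_mono)
    have s0: "(\<Sum>y\<in>T'. y) = 0" using less.hyps[OF lt fin cl] .
    have T: "T = insert x (insert (-x) T')" unfolding T'_def using x mx by auto
    have "(\<Sum>y\<in>T. y) = x + (-x + (\<Sum>y\<in>T'. y))"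
      unfolding T using fin mx(2) by (simp add: T'_def)
    then show ?thesis using s0 by simp
  qed
qed

lemma sum_univ:
  assumes "card (involutions :: 'b::{ab_group_add,finite} set) = 1"
  shows "\<exists>i::'b. i \<noteq> 0 \<and> i + i = 0 \<and> (\<Sum>x\<in>UNIV. x) = i"
proof -
  obtain i :: 'b where inv: "involutions = {i}" using assms card_1_singletonE by blast
  have i: "i \<noteq> 0" "i + i = 0" using inv unfolding involutions_def by auto
  define T where "T = (UNIV::'b set) - {0, i}"
  have cl: "\<forall>x\<in>T. -x \<in> T \<and> -x \<noteq> x"
  proof
    fix x assume x: "x \<in> T"
    have "-x \<noteq> x"
    proof
      assume "-x = x"
      then have "x + x = 0" by (metis add.right_inverse)
      moreover have "x \<noteq> 0" using x T_def by auto
      ultimately have "x \<in> involutions" unfolding involutions_def by auto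
      then show False using x inv T_def by auto
    qed
    moreover have "-x \<in> T"
    proof -
      have mi: "-i = i" using i(2) by (metis eq_neg_iff_add_eq_0)
      have "x \<noteq> 0" "x \<noteq> i" using x T_def by auto
      then have "-x \<noteq> 0" "-x \<noteq> i" using mi by (auto simp: minus_equation_iff)
      then show ?thesis unfolding T_def by simp
    qed
    ultimately show "-x \<in> T \<and> -x \<noteq> x" by simp
  qed
  have s: "(\<Sum>x\<in>T. x) = 0" using pair_sum_zero[OF _ cl] by simp
  have U: "(UNIV::'b set) = insert 0 (insert i T)" unfolding T_def by auto
  have "(\<Sum>x\<in>UNIV. x) = 0 + (i + (\<Sum>x\<in>T. x))"
    unfolding U using i by (simp add: T_def)
  then show ?thesis using i s by auto
qed

theorem mainTheorem1:
  fixes V :: "'a set" and E :: "'a \<Rightarrow> 'a \<Rightarrow> bool" and r n :: nat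
    and A :: "'b::{ab_group_add, finite} itself"
  assumes "simple_graph V E"
    and "card V = n"
    and "regular V E r"
    and "even n"
    and "card (UNIV :: 'b set) = n"
    and "card (involutions :: 'b set) = 1"
    and "A_distance_antimagic V E A"
  shows "odd r"
proof -
  obtain f :: "'a \<Rightarrow> 'b" where f: "bij_betw f V UNIV" "inj_on (weight V E f) V"
    using assms(7) unfolding A_distance_antimagic_def A_distance_antimagic_labelling_def by blast
  obtain i :: 'b where i: "i \<noteq> 0" "i + i = 0" "(\<Sum>x\<in>UNIV. x) = i"
    using sum_univ[OF assms(6)] by blast
  have finV: "finite V" using assms(1) unfolding simple_graph_def by simp
  have sf: "(\<Sum>y\<in>V. f y) = i"
    using sum.reindex_bij_betw[OF f(1), of "\<lambda>x. x"] i(3) by simp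
  have wV: "weight V E f ` V = UNIV"
    using f(2) assms(2,5) by (simp add: card_image card_subset_eq)
  have sw: "(\<Sum>x\<in>V. weight V E f x) = i"
    using sum.reindex[OF f(2), of "\<lambda>x. x"] wV i(3) by simp
  have sym: "\<And>y. {x\<in>V. E x y} = nbhd V E y"
    using assms(1) unfolding simple_graph_def nbhd_def by blast
  have "(\<Sum>x\<in>V. weight V E f x) = (\<Sum>x\<in>V. \<Sum>y\<in>{y\<in>V. E x y}. f y)"
    unfolding weight_def nbhd_def by simp
  also have "\<dots> = (\<Sum>y\<in>V. \<Sum>x\<in>{x\<in>V. E x y}. f y)"
    by (rule sum.swap_restrict[OF finV finV])
  also have "\<dots> = (\<Sum>y\<in>V. mult r (f y))"
  proof (rule sum.cong[OF refl])
    fix y assume y: "y \<in> V"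
    have "card {x\<in>V. E x y} = r" using sym assms(3) y unfolding regular_def by simp
    then show "(\<Sum>x\<in>{x\<in>V. E x y}. f y) = mult r (f y)"
      using sum_const_mult[of "{x\<in>V. E x y}" "f y"] finV by simp
  qed
  also have "\<dots> = mult r (\<Sum>y\<in>V. f y)"
    unfolding mult_def by (rule sum.swap)
  finally have "mult r i = i" using sw sf by simp
  then show "odd r" using mult_inv[OF i(2), of r] i(1) by (auto split: if_splits)
qed

end
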